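(* Let $n\ge2$ and let $M\in\mathbb{R}^{n\times n}$ be Metzler, output unstable and nonsingular. Then (a) $S^TM^{-1}e_n\ge0$ and $e_n^TM^{-1}S\ge0$ entrywise, and $e_n^TM^{-1}e_n>0$; (b) for every $b_0\in\mathbb{R}^n_{\ge0}$, $g_0:=-e_n^TM^{-1}b_0\le0$, and $g_n:=-e_n^TM^{-1}e_n<0$.
   Context: $S:=[e_1\ \cdots\ e_{n-1}]\in\mathbb{R}^{n\times(n-1)}$, with $e_i$ the standard basis vectors. Metzler: all off-diagonal entries nonnegative. Hurwitz stable: all eigenvalues have negative real part. A matrix $M\in\mathbb{R}^{n\times n}$ is output unstable if $S^TMS$ is Hurwitz stable and $e_n^TMe_n>0$. *)

theory Defs
  imports "Jordan_Normal_Form.Matrix" "Jordan_Normal_Form.Char_Poly" Complex_Main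
begin

definition S_mat :: "nat \<Rightarrow> real mat" where
  "S_mat n = mat n (n - 1) (\<lambda>(i, j). if i = j then 1 else 0)"

definition en_col :: "nat \<Rightarrow> real mat" where
  "en_col n = mat n 1 (\<lambda>(i, j). if i = n - 1 then 1 else 0)"

definition metzler :: "real mat \<Rightarrow> bool" where
  "metzler M \<longleftrightarrow> (\<forall>i < dim_row M. \<forall>j < dim_col M. i \<noteq> j \<longrightarrow> M $$ (i, j) \<ge> 0)"

definition hurwitz :: "real mat \<Rightarrow> bool" where
  "hurwitz A \<longleftrightarrow> square_mat A \<and>
     (\<forall>z. eigenvalue (map_mat complex_of_real A) z \<longrightarrow> Re z < 0)"

definition output_unstable :: "real mat \<Rightarrow> bool" where
  "output_unstable M \<longleftrightarrow>
     (let n = dim_row M in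
       hurwitz (transpose_mat (S_mat n) * M * S_mat n) \<and>
       (transpose_mat (en_col n) * M * en_col n) $$ (0, 0) > 0)"

definition nonneg_mat :: "real mat \<Rightarrow> bool" where
  "nonneg_mat A \<longleftrightarrow> (\<forall>i < dim_row A. \<forall>j < dim_col A. A $$ (i, j) \<ge> 0)"

end

theory Submission imports Defs "Jordan_Normal_Form.Spectral_Radius" begin

lemma ev_transfer:
  fixes A :: "real mat" and c r :: real and \<mu> :: complex
  assumes A: "A \<in> carrier_mat m m" and c: "c > 0" and r: "r > 0"
    and ev: "eigenvalue (map_mat complex_of_real ((1/(c*r)) \<cdot>\<^sub>m (A + c \<cdot>\<^sub>m 1\<^sub>m m))) \<mu>"
  shows "eigenvalue (map_mat complex_of_real A) (of_real (c*r) * \<mu> - of_real c)"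
proof -
  let ?D = "map_mat complex_of_real ((1/(c*r)) \<cdot>\<^sub>m (A + c \<cdot>\<^sub>m 1\<^sub>m m))"
  from ev obtain v where v: "v \<in> carrier_vec m" "v \<noteq> 0\<^sub>v m" and Dv: "?D *\<^sub>v v = \<mu> \<cdot>\<^sub>v v"
    unfolding eigenvalue_def eigenvector_def using A by auto
  have "map_mat complex_of_real A *\<^sub>v v = (of_real (c*r) * \<mu> - of_real c) \<cdot>\<^sub>v v"
  proof (rule eq_vecI)
    fix i assume i: "i < dim_vec ((of_real (c*r) * \<mu> - of_real c) \<cdot>\<^sub>v v)"
    hence im: "i < m" using v by auto
    have e0: "(?D *\<^sub>v v) $ i = (\<Sum>j<m. ?D$$(i,j) * v$j)"
      using A v im by (simp add: scalar_prod_def atLeast0LessThan)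
    have e1a: "(?D *\<^sub>v v) $ i = (\<Sum>j<m. complex_of_real (A$$(i,j)) * v$j / of_real (c*r) + (if j = i then of_real c * v$i / of_real (c*r) else 0))"
      unfolding e0
    proof (rule sum.cong[OF refl])
      fix j assume "j \<in> {..<m}"
      hence j: "j < m" by auto
      have "?D $$ (i,j) = of_real ((A$$(i,j) + (if i = j then c else 0))/(c*r))"
        using A im j by simp
      thus "?D $$ (i, j) * v $ j = complex_of_real (A$$(i,j)) * v$j / of_real (c*r) + (if j = i then of_real c * v$i / of_real (c*r) else 0)"
        using c r by (auto simp: field_simps)
    qed
    have e1: "(?D *\<^sub>v v) $ i = (\<Sum>j<m. complex_of_real (A$$(i,j)) * v$j) / of_real (c*r) + of_real c * v$i / of_real (c*r)"
      unfolding e1a sum.distrib using im by (simp add: sum_divide_distrib)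
    have e2: "(?D *\<^sub>v v) $ i = \<mu> * v $ i" using Dv im v by (metis carrier_vecD index_smult_vec(1))
    have e3: "(map_mat complex_of_real A *\<^sub>v v) $ i = (\<Sum>j<m. complex_of_real (A$$(i,j)) * v$j)"
      using A v im by (simp add: scalar_prod_def atLeast0LessThan)
    have "(\<Sum>j<m. complex_of_real (A$$(i,j)) * v$j) = of_real (c*r) * \<mu> * v$i - of_real c * v$i"
      using e1 e2 c r by (simp add: field_simps)
    thus "(map_mat complex_of_real A *\<^sub>v v) $ i = ((of_real (c*r) * \<mu> - of_real c) \<cdot>\<^sub>v v) $ i"
      using e3 im v by (simp add: algebra_simps)
  qed (use A v in auto)
  thus ?thesis unfolding eigenvalue_def eigenvector_def using A v by auto
qed

lemma term_nonneg: "Re z < 0 \<Longrightarrow> 0 \<le> (cmod z)^2 / (-2 * Re z)"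
  by (rule divide_nonneg_pos) auto

lemma key:
  fixes A :: "real mat"
  assumes A: "A \<in> carrier_mat m m" and m: "m > 0"
    and metz: "\<forall>i<m. \<forall>j<m. i \<noteq> j \<longrightarrow> A$$(i,j) \<ge> 0"
    and hur: "\<forall>z. eigenvalue (map_mat complex_of_real A) z \<longrightarrow> Re z < 0"
  shows "\<exists>Q \<in> carrier_mat m m. A * Q = - 1\<^sub>m m \<and> Q * A = - 1\<^sub>m m \<and> (\<forall>i<m. \<forall>j<m. Q$$(i,j) \<ge> 0)"
proof -
  let ?AC = "map_mat complex_of_real A"
  have AC: "?AC \<in> carrier_mat m m" using A by auto
  define E where "E = spectrum ?AC"
  have finE: "finite E" unfolding E_def using card_finite_spectrum(1)[OF AC] .
  have hE: "\<And>z. z \<in> E \<Longrightarrow> Re z < 0" using hur unfolding E_def spectrum_def by auto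
  define c where "c = 1 + (\<Sum>i<m. \<bar>A$$(i,i)\<bar>) + (\<Sum>z\<in>E. (cmod z)^2 / (-2 * Re z))"
  have s2: "(\<Sum>z\<in>E. (cmod z)^2 / (-2 * Re z)) \<ge> 0"
    by (rule sum_nonneg) (use hE term_nonneg in blast)
  have s1: "(\<Sum>i<m. \<bar>A$$(i,i)\<bar>) \<ge> 0" by (rule sum_nonneg) auto
  have cpos: "c > 0" unfolding c_def using s1 s2 by linarith
  have cdiag: "\<And>i. i < m \<Longrightarrow> \<bar>A$$(i,i)\<bar> \<le> c"
  proof -
    fix i assume "i < m"
    hence "\<bar>A$$(i,i)\<bar> \<le> (\<Sum>i<m. \<bar>A$$(i,i)\<bar>)"
      by (intro member_le_sum) auto
    thus "\<bar>A$$(i,i)\<bar> \<le> c" unfolding c_def using s2 by linarith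
  qed
  have cE: "\<And>z. z \<in> E \<Longrightarrow> cmod (z + of_real c) < c"
  proof -
    fix z assume z: "z \<in> E"
    have t: "(cmod z)^2 / (-2 * Re z) \<le> (\<Sum>z\<in>E. (cmod z)^2 / (-2 * Re z))"
      by (rule member_le_sum[OF z _ finE]) (use hE term_nonneg in blast)
    have lt: "(cmod z)^2 / (-2 * Re z) < c" unfolding c_def using t s1 by linarith
    have rz: "Re z < 0" using hE z by auto
    have pz: "-2 * Re z > 0" using rz by simp
    have "(cmod z)^2 < c * (-2 * Re z)" using lt pos_divide_less_eq[OF pz] by (simp only: mult.commute)
    hence "(Re z)^2 + (Im z)^2 < c * (-2 * Re z)" by (simp add: cmod_power2)
    moreover have "(cmod (z + of_real c))^2 = (Re z + c)^2 + (Im z)^2" by (simp add: cmod_power2)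
    ultimately have "(cmod (z + of_real c))^2 < c^2" by (simp add: power2_eq_square algebra_simps)
    thus "cmod (z + of_real c) < c" using cpos by (smt (verit) power_mono norm_ge_zero)
  qed
  define Mx where "Mx = Max (insert 0 ((\<lambda>z. cmod (z + of_real c)/c) ` E))"
  have Mx0: "Mx \<ge> 0" unfolding Mx_def using finE by simp
  have Mx1: "Mx < 1" unfolding Mx_def using finE cE cpos by (simp add: Max_less_iff)
  have MxE: "\<And>z. z \<in> E \<Longrightarrow> cmod (z + of_real c)/c \<le> Mx" unfolding Mx_def using finE by (intro Max_ge) auto
  define r where "r = (1 + Mx)/2"
  have r0: "r > 0" and r1: "r < 1" using Mx0 Mx1 unfolding r_def by auto
  define D where "D = (1/(c*r)) \<cdot>\<^sub>m (A + c \<cdot>\<^sub>m 1\<^sub>m m)"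
  define C where "C = (1/c) \<cdot>\<^sub>m (A + c \<cdot>\<^sub>m 1\<^sub>m m)"
  have D: "D \<in> carrier_mat m m" and C: "C \<in> carrier_mat m m" unfolding D_def C_def using A by auto
  have CD: "C = r \<cdot>\<^sub>m D" unfolding C_def D_def using A r0 cpos by (intro eq_matI) auto
  let ?DC = "map_mat complex_of_real D"
  have DC: "?DC \<in> carrier_mat m m" using D by auto
  have evD: "\<And>\<mu>. eigenvalue ?DC \<mu> \<Longrightarrow> cmod \<mu> < 1"
  proof -
    fix \<mu> assume "eigenvalue ?DC \<mu>"
    from ev_transfer[OF A cpos r0 this[unfolded D_def]]
    have "of_real (c*r) * \<mu> - of_real c \<in> E" unfolding E_def spectrum_def by auto
    from MxE[OF this] have "cmod (of_real (c*r) * \<mu>) / c \<le> Mx" by simp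
    hence "r * cmod \<mu> \<le> Mx" using cpos r0 by (simp add: norm_mult abs_mult)
    moreover have "Mx < r" using Mx1 unfolding r_def by (simp add: field_simps)
    ultimately have "r * cmod \<mu> < r" by linarith
    thus "cmod \<mu> < 1" using r0 by simp
  qed
  have sr: "spectral_radius ?DC < 1"
    using spectral_radius_mem_max(1)[OF DC m] evD unfolding spectrum_def by auto
  obtain as where "char_poly ?DC = (\<Prod>a\<leftarrow>as. [:- a, 1:])" using char_poly_factorized[OF DC] by auto
  from jordan_nf_exists[OF DC this] have jnf: "\<exists>n_as. jordan_nf ?DC n_as" .
  obtain K where K: "\<And>k. norm_bound (?DC ^\<^sub>m k) K"
    using spectral_radius_jnf_norm_bound_less_1[OF DC sr jnf] by auto
  have Dk: "\<And>k i j. i < m \<Longrightarrow> j < m \<Longrightarrow> \<bar>(D ^\<^sub>m k) $$ (i,j)\<bar> \<le> K"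
  proof -
    fix k i j assume ij: "i < m" "j < m"
    have "norm ((?DC ^\<^sub>m k) $$ (i,j)) \<le> K" using K[of k] ij DC unfolding norm_bound_def by auto
    also have "?DC ^\<^sub>m k = map_mat complex_of_real (D ^\<^sub>m k)"
      by (rule of_real_hom.mat_hom_pow[OF D, symmetric])
    finally show "\<bar>(D ^\<^sub>m k) $$ (i,j)\<bar> \<le> K" using ij D by simp
  qed
  have Ck: "\<And>k. C ^\<^sub>m k = (r^k) \<cdot>\<^sub>m (D ^\<^sub>m k)"
  proof -
    fix k show "C ^\<^sub>m k = (r^k) \<cdot>\<^sub>m (D ^\<^sub>m k)"
    proof (induct k)
      case 0 thus ?case using C D by (intro eq_matI) auto
    next
      case (Suc k)
      have "C ^\<^sub>m Suc k = (r^k) \<cdot>\<^sub>m (D ^\<^sub>m k) * (r \<cdot>\<^sub>m D)" using Suc CD by simp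
      also have "\<dots> = (r^k) \<cdot>\<^sub>m ((D ^\<^sub>m k) * (r \<cdot>\<^sub>m D))"
        using D by (simp add: mult_smult_assoc_mat[of _ m m _ m])
      also have "\<dots> = (r^k) \<cdot>\<^sub>m (r \<cdot>\<^sub>m (D ^\<^sub>m Suc k))"
        using D by (simp add: mult_smult_distrib[of _ m m _ m])
      also have "\<dots> = (r^Suc k) \<cdot>\<^sub>m (D ^\<^sub>m Suc k)"
        by (intro eq_matI) auto
      finally show ?case .
    qed
  qed
  have Ckb: "\<And>k i j. i < m \<Longrightarrow> j < m \<Longrightarrow> \<bar>(C ^\<^sub>m k) $$ (i,j)\<bar> \<le> r^k * K"
    using Dk D r0 by (simp add: Ck abs_mult mult_left_mono)
  have Cnn: "\<And>i j. i < m \<Longrightarrow> j < m \<Longrightarrow> C $$ (i,j) \<ge> 0"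
  proof -
    fix i j assume ij: "i < m" "j < m"
    have e: "C $$ (i,j) = (A$$(i,j) + (if i = j then c else 0)) / c" unfolding C_def using A ij by simp
    show "C $$ (i,j) \<ge> 0"
    proof (cases "i = j")
      case True thus ?thesis using e cdiag[OF ij(1)] cpos by simp
    next
      case False thus ?thesis using e metz ij cpos by simp
    qed
  qed
  have Cknn: "\<And>k i j. i < m \<Longrightarrow> j < m \<Longrightarrow> (C ^\<^sub>m k) $$ (i,j) \<ge> 0"
  proof -
    fix k show "\<And>i j. i < m \<Longrightarrow> j < m \<Longrightarrow> (C ^\<^sub>m k) $$ (i,j) \<ge> 0"
    proof (induct k)
      case 0 thus ?case using C by simp
    next
      case (Suc k)
      have "(C ^\<^sub>m Suc k) $$ (i,j) = (\<Sum>l<m. (C ^\<^sub>m k) $$ (i,l) * C $$ (l,j))"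
        using Suc.prems C by (simp add: scalar_prod_def atLeast0LessThan)
      also have "\<dots> \<ge> 0" using Suc Cnn by (intro sum_nonneg) auto
      finally show ?case .
    qed
  qed
  have detA: "det A \<noteq> 0"
  proof
    assume d0: "det A = 0"
    have "char_matrix ?AC 0 = ?AC" unfolding char_matrix_def using AC by (intro eq_matI) auto
    hence "eigenvalue ?AC 0" using eigenvalue_det[OF AC, of 0] d0 of_real_hom.hom_det[of A] by simp
    thus False using hur by auto
  qed
  obtain P where P: "P \<in> carrier_mat m m" "P * A = 1\<^sub>m m" "A * P = 1\<^sub>m m"
    using det_non_zero_imp_unit[OF A detA, of undefined] unfolding Units_def ring_mat_def by auto
  define Q where "Q = - P"
  have Q: "Q \<in> carrier_mat m m" unfolding Q_def using P by auto
  have AQ: "A * Q = - 1\<^sub>m m" unfolding Q_def using P A uminus_mult_right_mat[of A P] by simp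
  have QA: "Q * A = - 1\<^sub>m m" unfolding Q_def using P A uminus_mult_left_mat[of P A] by simp
  have CQ: "C * Q = (1/c) \<cdot>\<^sub>m (A * Q + c \<cdot>\<^sub>m Q)"
  proof -
    have "C * Q = (1/c) \<cdot>\<^sub>m ((A + c \<cdot>\<^sub>m 1\<^sub>m m) * Q)" unfolding C_def
      using A Q by (simp add: mult_smult_assoc_mat[of _ m m _ m])
    also have "(A + c \<cdot>\<^sub>m 1\<^sub>m m) * Q = A * Q + (c \<cdot>\<^sub>m 1\<^sub>m m) * Q"
      using A Q by (simp add: add_mult_distrib_mat[of _ m m _ _ m])
    also have "(c \<cdot>\<^sub>m 1\<^sub>m m) * Q = c \<cdot>\<^sub>m Q"
      using Q by (simp add: mult_smult_assoc_mat[of _ m m _ m])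
    finally show ?thesis .
  qed
  have CQe: "\<And>i j. i < m \<Longrightarrow> j < m \<Longrightarrow> (C * Q) $$ (i,j) = Q $$ (i,j) - (if i = j then 1/c else 0)"
    using AQ Q A cpos unfolding CQ by (auto simp: field_simps)
  have CkQ: "\<And>k i j. i < m \<Longrightarrow> j < m \<Longrightarrow> (C ^\<^sub>m k * Q) $$ (i,j) \<le> Q $$ (i,j)"
  proof -
    fix k show "\<And>i j. i < m \<Longrightarrow> j < m \<Longrightarrow> (C ^\<^sub>m k * Q) $$ (i,j) \<le> Q $$ (i,j)"
    proof (induct k)
      case 0 thus ?case using Q C by simp
    next
      case (Suc k)
      have "C ^\<^sub>m Suc k * Q = C ^\<^sub>m k * (C * Q)" using C Q by (simp add: assoc_mult_mat[of _ m m _ m _ m])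
      hence "(C ^\<^sub>m Suc k * Q) $$ (i,j) = (\<Sum>l<m. (C ^\<^sub>m k) $$ (i,l) * (C * Q) $$ (l,j))"
        using Suc.prems C Q by (simp add: scalar_prod_def atLeast0LessThan)
      also have "\<dots> \<le> (\<Sum>l<m. (C ^\<^sub>m k) $$ (i,l) * Q $$ (l,j))"
      proof (rule sum_mono)
        fix l assume "l \<in> {..<m}"
        hence l: "l < m" by auto
        have "(C ^\<^sub>m k) $$ (i,l) * (if l = j then 1/c else 0) \<ge> 0"
          using Cknn[OF Suc.prems(1) l] cpos by simp
        thus "(C ^\<^sub>m k) $$ (i,l) * (C * Q) $$ (l,j) \<le> (C ^\<^sub>m k) $$ (i,l) * Q $$ (l,j)"
          unfolding CQe[OF l Suc.prems(2)] by (simp add: right_diff_distrib)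
      qed
      also have "\<dots> = (C ^\<^sub>m k * Q) $$ (i,j)"
        using Suc.prems C Q by (simp add: scalar_prod_def atLeast0LessThan)
      also have "\<dots> \<le> Q $$ (i,j)" using Suc by auto
      finally show ?case .
    qed
  qed
  have CkQlow: "\<And>k i j. i < m \<Longrightarrow> j < m \<Longrightarrow> (C ^\<^sub>m k * Q) $$ (i,j) \<ge> - (r^k * (K * (\<Sum>l<m. \<bar>Q $$ (l,j)\<bar>)))"
  proof -
    fix k i j assume ij: "i < m" "j < m"
    have "(C ^\<^sub>m k * Q) $$ (i,j) = (\<Sum>l<m. (C ^\<^sub>m k) $$ (i,l) * Q $$ (l,j))"
      using ij C Q by (simp add: scalar_prod_def atLeast0LessThan)
    also have "\<dots> \<ge> (\<Sum>l<m. - (r^k * K * \<bar>Q $$ (l,j)\<bar>))"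
    proof (rule sum_mono)
      fix l assume "l \<in> {..<m}"
      hence l: "l < m" by auto
      have "\<bar>(C ^\<^sub>m k) $$ (i,l) * Q $$ (l,j)\<bar> \<le> r^k * K * \<bar>Q $$ (l,j)\<bar>"
        unfolding abs_mult by (rule mult_right_mono[OF Ckb[OF ij(1) l]]) simp
      thus "- (r^k * K * \<bar>Q $$ (l,j)\<bar>) \<le> (C ^\<^sub>m k) $$ (i,l) * Q $$ (l,j)" by linarith
    qed
    finally show "(C ^\<^sub>m k * Q) $$ (i,j) \<ge> - (r^k * (K * (\<Sum>l<m. \<bar>Q $$ (l,j)\<bar>)))"
      by (simp add: sum_negf sum_distrib_left mult.assoc)
  qed
  have K0: "K \<ge> 0"
  proof -
    have "\<bar>(C ^\<^sub>m 0) $$ (0,0)\<bar> \<le> r^0 * K" by (rule Ckb[OF m m])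
    thus ?thesis using abs_ge_zero[of "(C ^\<^sub>m 0) $$ (0,0)"] by simp
  qed
  have Qnn: "\<forall>i<m. \<forall>j<m. Q $$ (i,j) \<ge> 0"
  proof (intro allI impI, rule ccontr)
    fix i j assume ij: "i < m" "j < m" and neg: "\<not> Q $$ (i,j) \<ge> 0"
    define W where "W = K * (\<Sum>l<m. \<bar>Q $$ (l,j)\<bar>)"
    have W0: "W \<ge> 0" unfolding W_def using K0 by (simp add: sum_nonneg)
    have pos: "- Q $$ (i,j) / (W + 1) > 0" using neg W0 by (simp add: field_simps)
    obtain k where k: "r^k < - Q $$ (i,j) / (W + 1)" using real_arch_pow_inv[OF pos r1] by auto
    have W1: "W + 1 > 0" using W0 by simp
    have "r^k * (W + 1) < - Q $$ (i,j)" using k pos_less_divide_eq[OF W1] by blast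
    moreover have "r^k * W \<le> r^k * (W + 1)" using r0 by simp
    moreover have "Q $$ (i,j) \<ge> - (r^k * W)" using CkQ[OF ij, of k] CkQlow[OF ij, of k] unfolding W_def by linarith
    ultimately show False by linarith
  qed
  show ?thesis by (rule bexI[OF _ Q], intro conjI AQ QA Qnn)
qed

lemma solve_lemma:
  fixes Q A :: "real mat" and x b :: "nat \<Rightarrow> real"
  assumes Q: "Q \<in> carrier_mat m m" and A: "A \<in> carrier_mat m m" and QA: "Q * A = - 1\<^sub>m m"
    and h: "\<And>k. k < m \<Longrightarrow> (\<Sum>l<m. A$$(k,l) * x l) = - b k" and i: "i < m"
  shows "x i = (\<Sum>k<m. Q$$(i,k) * b k)"
proof -
  have "(\<Sum>k<m. Q$$(i,k) * (\<Sum>l<m. A$$(k,l) * x l)) = - (\<Sum>k<m. Q$$(i,k) * b k)"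
    using h by (simp add: sum_negf[symmetric])
  moreover have "(\<Sum>k<m. Q$$(i,k) * (\<Sum>l<m. A$$(k,l) * x l)) = (\<Sum>l<m. (\<Sum>k<m. Q$$(i,k) * A$$(k,l)) * x l)"
    by (simp add: sum_distrib_left sum_distrib_right mult.assoc) (rule sum.swap)
  moreover have "\<And>l. l < m \<Longrightarrow> (\<Sum>k<m. Q$$(i,k) * A$$(k,l)) = (if i = l then -1 else 0)"
  proof -
    fix l assume l: "l < m"
    have "(\<Sum>k<m. Q$$(i,k) * A$$(k,l)) = (Q * A) $$ (i,l)"
      using Q A i l by (simp add: scalar_prod_def atLeast0LessThan)
    also have "\<dots> = (if i = l then -1 else 0)" unfolding QA using i l by simp
    finally show "(\<Sum>k<m. Q$$(i,k) * A$$(k,l)) = (if i = l then -1 else 0)" .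
  qed
  hence "(\<Sum>l<m. (\<Sum>k<m. Q$$(i,k) * A$$(k,l)) * x l) = (\<Sum>l<m. (if i = l then - x l else 0))"
    by (intro sum.cong) auto
  moreover have "\<dots> = - x i" using i by simp
  ultimately show ?thesis by linarith
qed

lemma sum_ind_l: "i < (n::nat) \<Longrightarrow> (\<Sum>l<n. (if l = i then 1 else 0) * f l) = (f i :: real)"
proof -
  assume i: "i < n"
  have "(\<Sum>l<n. (if l = i then 1 else 0) * f l) = (\<Sum>l<n. if l = i then f l else 0)" by (rule sum.cong) auto
  also have "\<dots> = f i" using i sum.delta[of "{..<n}" i f] by simp
  finally show ?thesis .
qed

lemma sum_ind_r: "i < (n::nat) \<Longrightarrow> (\<Sum>l<n. f l * (if l = i then 1 else 0)) = (f i :: real)"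
  using sum_ind_l[of i n f] by (simp add: mult.commute)

lemma ST_entry:
  assumes X: "X \<in> carrier_mat n k" and i: "i < n - 1" and j: "j < k"
  shows "(transpose_mat (S_mat n) * X) $$ (i,j) = X $$ (i,j)"
proof -
  have "(transpose_mat (S_mat n) * X) $$ (i,j) = (\<Sum>l<n. (if l = i then 1 else 0) * X $$ (l,j))"
    using X i j by (simp add: S_mat_def scalar_prod_def atLeast0LessThan)
  also have "\<dots> = X $$ (i,j)" using i by (intro sum_ind_l) auto
  finally show ?thesis .
qed

lemma S_entry:
  assumes X: "X \<in> carrier_mat k n" and i: "i < k" and j: "j < n - 1"
  shows "(X * S_mat n) $$ (i,j) = X $$ (i,j)"
proof -
  have "(X * S_mat n) $$ (i,j) = (\<Sum>l<n. X $$ (i,l) * (if l = j then 1 else 0))"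
    using X i j by (simp add: S_mat_def scalar_prod_def atLeast0LessThan)
  also have "\<dots> = X $$ (i,j)" using j by (intro sum_ind_r) auto
  finally show ?thesis .
qed

lemma eT_entry:
  assumes X: "X \<in> carrier_mat n k" and n: "n > 0" and j: "j < k"
  shows "(transpose_mat (en_col n) * X) $$ (0,j) = X $$ (n - 1,j)"
proof -
  have "(transpose_mat (en_col n) * X) $$ (0,j) = (\<Sum>l<n. (if l = n - 1 then 1 else 0) * X $$ (l,j))"
    using X n j by (simp add: en_col_def scalar_prod_def atLeast0LessThan)
  also have "\<dots> = X $$ (n - 1,j)" using n by (intro sum_ind_l) auto
  finally show ?thesis .
qed

lemma e_entry:
  assumes X: "X \<in> carrier_mat k n" and n: "n > 0" and i: "i < k"
  shows "(X * en_col n) $$ (i,0) = X $$ (i, n - 1)"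
proof -
  have "(X * en_col n) $$ (i,0) = (\<Sum>l<n. X $$ (i,l) * (if l = n - 1 then 1 else 0))"
    using X n i by (simp add: en_col_def scalar_prod_def atLeast0LessThan)
  also have "\<dots> = X $$ (i, n - 1)" using n by (intro sum_ind_r) auto
  finally show ?thesis .
qed

lemma mult_split:
  fixes X Y :: "real mat"
  assumes X: "X \<in> carrier_mat (Suc m) (Suc m)" and Y: "Y \<in> carrier_mat (Suc m) (Suc m)"
    and i: "i < Suc m" and j: "j < Suc m"
  shows "(X * Y) $$ (i,j) = (\<Sum>l<m. X$$(i,l) * Y$$(l,j)) + X$$(i,m) * Y$$(m,j)"
  using X Y i j by (simp add: scalar_prod_def atLeast0LessThan)

theorem mainTheorem10:
  fixes n :: nat and M Minv :: "real mat"
  assumes "n \<ge> 2"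
    and "M \<in> carrier_mat n n"
    and "metzler M"
    and "output_unstable M"
    and "det M \<noteq> 0"
    and "Minv \<in> carrier_mat n n"
    and "M * Minv = 1\<^sub>m n" and "Minv * M = 1\<^sub>m n"
  shows "nonneg_mat (transpose_mat (S_mat n) * Minv * en_col n)
       \<and> nonneg_mat (transpose_mat (en_col n) * Minv * S_mat n)
       \<and> (transpose_mat (en_col n) * Minv * en_col n) $$ (0, 0) > 0
       \<and> (\<forall>b0 \<in> carrier_vec n. (\<forall>i < n. b0 $ i \<ge> 0) \<longrightarrow>
            - (unit_vec n (n - 1) \<bullet> (Minv *\<^sub>v b0)) \<le> (0::real))
       \<and> - ((transpose_mat (en_col n) * Minv * en_col n) $$ (0, 0)) < 0"
proof -
  note Mc = assms(2) and Nc = assms(6) and MN = assms(7) and NM = assms(8)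
  have "n = Suc (n - 1)" "n - 1 > 0" using assms(1) by auto
  then obtain m where nm: "n = Suc m" and m0: "m > 0" by blast
  have m1: "n - 1 = m" using nm by simp
  let ?S = "S_mat n" and ?e = "en_col n"
  have Sc: "?S \<in> carrier_mat n m" unfolding S_mat_def m1 by simp
  have ec: "?e \<in> carrier_mat n 1" unfolding en_col_def by simp
  define A where "A = transpose_mat ?S * M * ?S"
  have A: "A \<in> carrier_mat m m" unfolding A_def using Sc Mc by auto
  have Ae: "\<And>i j. i < m \<Longrightarrow> j < m \<Longrightarrow> A$$(i,j) = M$$(i,j)"
  proof -
    fix i j assume ij: "i < m" "j < m"
    have "A$$(i,j) = (transpose_mat ?S * M) $$ (i,j)" unfolding A_def
      by (rule S_entry[where k=m]) (use Sc Mc ij m1 in auto)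
    also have "\<dots> = M$$(i,j)" by (rule ST_entry[where k=n]) (use Mc ij m1 nm in auto)
    finally show "A$$(i,j) = M$$(i,j)" .
  qed
  have dimM: "dim_row M = n" using Mc by simp
  have hurA: "hurwitz A" using assms(4) unfolding output_unstable_def Let_def dimM A_def by simp
  have dpos: "M$$(m,m) > 0"
  proof -
    have "0 < (transpose_mat ?e * M * ?e) $$ (0,0)" using assms(4) unfolding output_unstable_def Let_def dimM by simp
    also have "(transpose_mat ?e * M * ?e) $$ (0,0) = (transpose_mat ?e * M) $$ (0, n - 1)"
      by (rule e_entry[where k=1]) (use ec Mc nm in auto)
    also have "\<dots> = M $$ (n - 1, n - 1)" by (rule eT_entry[where k=n]) (use Mc nm in auto)
    finally show ?thesis using m1 by simp
  qed
  have metzA: "\<forall>i<m. \<forall>j<m. i \<noteq> j \<longrightarrow> A$$(i,j) \<ge> 0"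
    using assms(3) Ae Mc nm unfolding metzler_def by auto
  have hurA': "\<forall>z. eigenvalue (map_mat complex_of_real A) z \<longrightarrow> Re z < 0"
    using hurA unfolding hurwitz_def by auto
  obtain Q where Q: "Q \<in> carrier_mat m m" and AQ: "A * Q = - 1\<^sub>m m" and QA: "Q * A = - 1\<^sub>m m"
    and Qnn: "\<forall>i<m. \<forall>j<m. Q$$(i,j) \<ge> 0"
    using key[OF A m0 metzA hurA'] by blast
  define t where "t = Minv$$(m,m)"
  have colx: "\<And>i. i < m \<Longrightarrow> Minv$$(i,m) = t * (\<Sum>k<m. Q$$(i,k) * M$$(k,m))"
  proof -
    fix i assume i: "i < m"
    have "Minv$$(i,m) = (\<Sum>k<m. Q$$(i,k) * (t * M$$(k,m)))"
    proof (rule solve_lemma[OF Q A QA _ i, of "\<lambda>l. Minv$$(l,m)"])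
      fix k assume k: "k < m"
      have "(M * Minv) $$ (k,m) = 0" using MN k nm by simp
      hence "(\<Sum>l<m. M$$(k,l) * Minv$$(l,m)) + M$$(k,m) * Minv$$(m,m) = 0"
        using mult_split[of M m Minv k m] Mc Nc nm k by simp
      thus "(\<Sum>l<m. A$$(k,l) * Minv$$(l,m)) = - (t * M$$(k,m))"
        using Ae k unfolding t_def by (simp add: algebra_simps)
    qed
    thus "Minv$$(i,m) = t * (\<Sum>k<m. Q$$(i,k) * M$$(k,m))" by (simp add: sum_distrib_left algebra_simps)
  qed
  define qb where "qb = (\<lambda>i. (\<Sum>k<m. Q$$(i,k) * M$$(k,m)))"
  have qb0: "\<And>i. i < m \<Longrightarrow> qb i \<ge> 0"
    unfolding qb_def using Qnn assms(3) Mc nm unfolding metzler_def by (intro sum_nonneg mult_nonneg_nonneg) auto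
  have tpos: "t > 0"
  proof -
    have "(M * Minv) $$ (m,m) = 1" using MN nm by simp
    hence "(\<Sum>l<m. M$$(m,l) * Minv$$(l,m)) + M$$(m,m) * t = 1"
      using mult_split[of M m Minv m m] Mc Nc nm unfolding t_def by simp
    hence "t * ((\<Sum>l<m. M$$(m,l) * qb l) + M$$(m,m)) = 1"
      using colx unfolding qb_def by (simp add: algebra_simps sum_distrib_left)
    moreover have "(\<Sum>l<m. M$$(m,l) * qb l) \<ge> 0"
      using qb0 assms(3) Mc nm unfolding metzler_def by (intro sum_nonneg mult_nonneg_nonneg) auto
    ultimately have "0 < t * ((\<Sum>l<m. M$$(m,l) * qb l) + M$$(m,m))"
      and "0 < (\<Sum>l<m. M$$(m,l) * qb l) + M$$(m,m)" using dpos by linarith+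
    thus "t > 0" using zero_less_mult_pos2 by blast
  qed
  have xnn: "\<And>i. i < m \<Longrightarrow> Minv$$(i,m) \<ge> 0"
    using colx qb0 tpos unfolding qb_def by (simp add: mult_nonneg_nonneg less_imp_le)
  have QtAt: "transpose_mat Q * transpose_mat A = - 1\<^sub>m m"
    using transpose_mult[of A m m Q m] AQ A Q by (simp add: transpose_uminus)
  have rowy: "\<And>j. j < m \<Longrightarrow> Minv$$(m,j) = t * (\<Sum>k<m. Q$$(k,j) * M$$(m,k))"
  proof -
    fix j assume j: "j < m"
    have "Minv$$(m,j) = (\<Sum>k<m. transpose_mat Q $$(j,k) * (t * M$$(m,k)))"
    proof (rule solve_lemma[of "transpose_mat Q" m "transpose_mat A", OF _ _ QtAt _ j, of "\<lambda>l. Minv$$(m,l)"])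
      show "transpose_mat Q \<in> carrier_mat m m" "transpose_mat A \<in> carrier_mat m m" using Q A by auto
      fix k assume k: "k < m"
      have "(Minv * M) $$ (m,k) = 0" using NM k nm by simp
      hence "(\<Sum>l<m. Minv$$(m,l) * M$$(l,k)) + Minv$$(m,m) * M$$(m,k) = 0"
        using mult_split[of Minv m M m k] Mc Nc nm k by simp
      thus "(\<Sum>l<m. transpose_mat A $$(k,l) * Minv$$(m,l)) = - (t * M$$(m,k))"
        using Ae k A unfolding t_def by (simp add: algebra_simps)
    qed
    thus "Minv$$(m,j) = t * (\<Sum>k<m. Q$$(k,j) * M$$(m,k))"
      using Q j by (simp add: sum_distrib_left algebra_simps)
  qed
  have ynn: "\<And>j. j < m \<Longrightarrow> Minv$$(m,j) \<ge> 0"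
  proof -
    fix j assume j: "j < m"
    have "(\<Sum>k<m. Q$$(k,j) * M$$(m,k)) \<ge> 0"
      using Qnn assms(3) Mc nm j unfolding metzler_def by (intro sum_nonneg mult_nonneg_nonneg) auto
    thus "Minv$$(m,j) \<ge> 0" using rowy[OF j] tpos by simp
  qed
  have rownn: "\<And>j. j < n \<Longrightarrow> Minv$$(m,j) \<ge> 0"
    using ynn tpos unfolding t_def nm by (metis less_Suc_eq less_imp_le)
  have g1: "nonneg_mat (transpose_mat ?S * Minv * ?e)"
    unfolding nonneg_mat_def
  proof (intro allI impI)
    fix i j assume i: "i < dim_row (transpose_mat ?S * Minv * ?e)" and j: "j < dim_col (transpose_mat ?S * Minv * ?e)"
    have i': "i < m" and j0: "j = 0" using i j Sc ec by auto
    have "(transpose_mat ?S * Minv * ?e) $$ (i,0) = (transpose_mat ?S * Minv) $$ (i, n - 1)"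
      by (rule e_entry[where k=m]) (use Sc Nc nm i' in auto)
    also have "\<dots> = Minv $$ (i, n - 1)" by (rule ST_entry[where k=n]) (use Nc nm i' in auto)
    finally show "(transpose_mat ?S * Minv * ?e) $$ (i,j) \<ge> 0" using xnn[OF i'] j0 m1 by simp
  qed
  have g2: "nonneg_mat (transpose_mat ?e * Minv * ?S)"
    unfolding nonneg_mat_def
  proof (intro allI impI)
    fix i j assume i: "i < dim_row (transpose_mat ?e * Minv * ?S)" and j: "j < dim_col (transpose_mat ?e * Minv * ?S)"
    have j': "j < m" and i0: "i = 0" using i j Sc ec by auto
    have "(transpose_mat ?e * Minv * ?S) $$ (0,j) = (transpose_mat ?e * Minv) $$ (0, j)"
      by (rule S_entry[where k=1]) (use ec Nc nm j' in auto)
    also have "\<dots> = Minv $$ (n - 1, j)" by (rule eT_entry[where k=n]) (use Nc nm j' in auto)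
    finally show "(transpose_mat ?e * Minv * ?S) $$ (i,j) \<ge> 0" using ynn[OF j'] i0 m1 by simp
  qed
  have g3: "(transpose_mat ?e * Minv * ?e) $$ (0,0) = t"
  proof -
    have "(transpose_mat ?e * Minv * ?e) $$ (0,0) = (transpose_mat ?e * Minv) $$ (0, n - 1)"
      by (rule e_entry[where k=1]) (use ec Nc nm in auto)
    also have "\<dots> = Minv $$ (n - 1, n - 1)" by (rule eT_entry[where k=n]) (use Nc nm in auto)
    finally show ?thesis unfolding t_def m1 .
  qed
  have g4: "\<forall>b0 \<in> carrier_vec n. (\<forall>i < n. b0 $ i \<ge> 0) \<longrightarrow>
            - (unit_vec n (n - 1) \<bullet> (Minv *\<^sub>v b0)) \<le> (0::real)"
  proof (intro ballI impI)
    fix b0 :: "real vec" assume b: "b0 \<in> carrier_vec n" and bnn: "\<forall>i < n. b0 $ i \<ge> 0"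
    have "unit_vec n (n - 1) \<bullet> (Minv *\<^sub>v b0) = (Minv *\<^sub>v b0) $ (n - 1)"
      using b Nc nm by (simp add: scalar_prod_left_unit)
    also have "\<dots> = (\<Sum>j<n. Minv$$(m,j) * b0$j)"
      using b Nc nm by (simp add: scalar_prod_def atLeast0LessThan)
    also have "\<dots> \<ge> 0" using rownn bnn by (intro sum_nonneg mult_nonneg_nonneg) auto
    finally show "- (unit_vec n (n - 1) \<bullet> (Minv *\<^sub>v b0)) \<le> (0::real)" by simp
  qed
  show ?thesis using g1 g2 g3 g4 tpos by simp
qed

end
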